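(* Let $a\ge 1$, and let $(c,d),(e,f)\in\mathcal{B}$ with $d$ and $f$ odd, $d\neq f$, and $\max\{c,c+d,e,e+f\}<a$. Then $U=\{(a,0),(c,d),(e,f)\}\subseteq\mathcal{B}$ is unavoidable.
   Context: The bicyclic inverse semigroup is $\mathcal{B}=\{(a,b)\in\mathbb{Z}\times\mathbb{Z}\mid a\ge 0,\ a+b\ge 0\}$ with multiplication $(a,b)(c,d)=(\max\{c+d,a\}-d,\ b+d)$. A subset $U\subseteq\mathcal{B}$ is called avoidable if $\mathcal{B}$ can be partitioned into two subsets $A$ and $B$ such that no element of $U$ can be written as a product $xy$ of two distinct elements $x\neq y$ both in $A$, or both in $B$. A set is unavoidable if it is not avoidable. *)

theory Defs
  imports Main
begin

definition bicyclic :: "(int \<times> int) set" where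
  "bicyclic = {(a, b). a \<ge> 0 \<and> a + b \<ge> 0}"

fun bmult :: "int \<times> int \<Rightarrow> int \<times> int \<Rightarrow> int \<times> int" where
  "bmult (a, b) (c, d) = (max (c + d) a - d, b + d)"

definition avoidable :: "(int \<times> int) set \<Rightarrow> bool" where
  "avoidable U \<longleftrightarrow> (\<exists>A B. A \<union> B = bicyclic \<and> A \<inter> B = {} \<and>
     (\<forall>x\<in>A. \<forall>y\<in>A. x \<noteq> y \<longrightarrow> bmult x y \<notin> U) \<and>
     (\<forall>x\<in>B. \<forall>y\<in>B. x \<noteq> y \<longrightarrow> bmult x y \<notin> U))"

definition unavoidable :: "(int \<times> int) set \<Rightarrow> bool" where
  "unavoidable U \<longleftrightarrow> \<not> avoidable U"

end

theory Submission
  imports Defs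
begin

definition P :: "int \<Rightarrow> int \<times> int" where
  "P k = (max 0 (-k), k)"

lemma P_bic: "P k \<in> bicyclic"
  by (auto simp: P_def bicyclic_def)

lemma edge:
  assumes "A \<union> B = bicyclic" "A \<inter> B = {}"
    "\<forall>x\<in>A. \<forall>y\<in>A. x \<noteq> y \<longrightarrow> bmult x y \<notin> U"
    "\<forall>x\<in>B. \<forall>y\<in>B. x \<noteq> y \<longrightarrow> bmult x y \<notin> U"
    "x \<in> bicyclic" "y \<in> bicyclic" "x \<noteq> y" "bmult x y \<in> U"
  shows "(x \<in> A) \<noteq> (y \<in> A)"
  using assms by blast

lemma L1:
  assumes "A \<union> B = bicyclic" "A \<inter> B = {}"
    "\<forall>x\<in>A. \<forall>y\<in>A. x \<noteq> y \<longrightarrow> bmult x y \<notin> U"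
    "\<forall>x\<in>B. \<forall>y\<in>B. x \<noteq> y \<longrightarrow> bmult x y \<notin> U"
    "(a,0) \<in> U" "0 < m" "m \<le> a"
  shows "(P m \<in> A) \<noteq> (P (-m) \<in> A)"
proof -
  have e1: "(P m \<in> A) \<noteq> ((a,-m) \<in> A)"
    by (rule edge[OF assms(1-4)]) (use assms(5-7) in \<open>auto simp: P_def bicyclic_def max_def\<close>)
  have e2: "((a,-m) \<in> A) \<noteq> ((a,m) \<in> A)"
    by (rule edge[OF assms(1-4)]) (use assms(5-7) in \<open>auto simp: P_def bicyclic_def max_def\<close>)
  have e3: "(P (-m) \<in> A) \<noteq> ((a,m) \<in> A)"
    by (rule edge[OF assms(1-4)]) (use assms(5-7) in \<open>auto simp: P_def bicyclic_def max_def\<close>)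
  show ?thesis using e1 e2 e3 by blast
qed

lemma L2a:
  assumes "A \<union> B = bicyclic" "A \<inter> B = {}"
    "\<forall>x\<in>A. \<forall>y\<in>A. x \<noteq> y \<longrightarrow> bmult x y \<notin> U"
    "\<forall>x\<in>B. \<forall>y\<in>B. x \<noteq> y \<longrightarrow> bmult x y \<notin> U"
    "(a,0) \<in> U" "(c,d) \<in> U" "(c,d) \<in> bicyclic" "c < a" "odd d" "k \<le> c + d"
  shows "(P k \<in> A) \<noteq> (P (d-k) \<in> A)"
proof -
  have c0: "c \<ge> 0" "c + d \<ge> 0" using assms(7) by (auto simp: bicyclic_def)
  have kd: "k \<noteq> d - k" using assms(9) by presburger
  have pr: "bmult (P k) (c,d-k) = (c,d)"
    using assms(10) c0 by (simp add: P_def max_def)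
  have e1: "(P k \<in> A) \<noteq> ((c,d-k) \<in> A)"
    by (rule edge[OF assms(1-4)]) (use assms(5-10) c0 kd pr in \<open>auto simp: P_def bicyclic_def max_def\<close>)
  have e2: "((a+d-k,k-d) \<in> A) \<noteq> ((c,d-k) \<in> A)"
    by (rule edge[OF assms(1-4)]) (use assms(5-10) c0 kd in \<open>auto simp: P_def bicyclic_def max_def\<close>)
  have e3: "((a+d-k,k-d) \<in> A) \<noteq> (P (d-k) \<in> A)"
    by (rule edge[OF assms(1-4)]) (use assms(5-10) c0 kd in \<open>auto simp: P_def bicyclic_def max_def\<close>)
  show ?thesis using e1 e2 e3 by blast
qed

lemma L2:
  assumes "A \<union> B = bicyclic" "A \<inter> B = {}"
    "\<forall>x\<in>A. \<forall>y\<in>A. x \<noteq> y \<longrightarrow> bmult x y \<notin> U"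
    "\<forall>x\<in>B. \<forall>y\<in>B. x \<noteq> y \<longrightarrow> bmult x y \<notin> U"
    "(a,0) \<in> U" "(c,d) \<in> U" "(c,d) \<in> bicyclic" "c < a" "odd d"
  shows "(P k \<in> A) \<noteq> (P (d-k) \<in> A)"
proof (cases "k \<le> c + d")
  case True
  then show ?thesis using L2a[OF assms] by blast
next
  case False
  have c0: "c \<ge> 0" "c + d \<ge> 0" using assms(7) by (auto simp: bicyclic_def)
  have "d - k \<le> c + d" using False c0 by linarith
  from L2a[OF assms this] show ?thesis by auto
qed

theorem lemma5p3:
  fixes a c d e f :: int
  assumes "a \<ge> 1"
    and "(c, d) \<in> bicyclic" and "(e, f) \<in> bicyclic"
    and "odd d" and "odd f" and "d \<noteq> f"
    and "Max {c, c + d, e, e + f} < a"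
  shows "unavoidable {(a, 0), (c, d), (e, f)}"
  unfolding unavoidable_def avoidable_def
proof
  let ?U = "{(a, 0), (c, d), (e, f)}"
  assume "\<exists>A B. A \<union> B = bicyclic \<and> A \<inter> B = {} \<and>
     (\<forall>x\<in>A. \<forall>y\<in>A. x \<noteq> y \<longrightarrow> bmult x y \<notin> ?U) \<and>
     (\<forall>x\<in>B. \<forall>y\<in>B. x \<noteq> y \<longrightarrow> bmult x y \<notin> ?U)"
  then obtain A B where H: "A \<union> B = bicyclic" "A \<inter> B = {}"
     "\<forall>x\<in>A. \<forall>y\<in>A. x \<noteq> y \<longrightarrow> bmult x y \<notin> ?U"
     "\<forall>x\<in>B. \<forall>y\<in>B. x \<noteq> y \<longrightarrow> bmult x y \<notin> ?U" by blast
  have lt: "c < a" "c + d < a" "e < a" "e + f < a" using assms(7) by auto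
  have c0: "c \<ge> 0" "c + d \<ge> 0" "e \<ge> 0" "e + f \<ge> 0" using assms(2,3) by (auto simp: bicyclic_def)
  obtain p where p: "d = 2*p+1" using assms(4) by (metis oddE)
  obtain q where q: "f = 2*q+1" using assms(5) by (metis oddE)
  define h where "h = p + q + 1"
  define g where "g = p - q"
  have 1: "(P h \<in> A) \<noteq> (P g \<in> A)"
    using L2[OF H, of a c d h] assms(2,4) lt by (simp add: h_def g_def p)
  have 2: "(P h \<in> A) \<noteq> (P (-g) \<in> A)"
    using L2[OF H, of a e f h] assms(3,5) lt by (simp add: h_def g_def q)
  have g0: "g \<noteq> 0" using assms(6) p q g_def by auto
  have ga: "\<bar>g\<bar> \<le> a" using lt c0 p q g_def by linarith
  have 3: "(P g \<in> A) \<noteq> (P (-g) \<in> A)"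
  proof (cases "g > 0")
    case True
    then show ?thesis using L1[OF H, of a g] ga by simp
  next
    case False
    then show ?thesis using L1[OF H, of a "-g"] ga g0 by auto
  qed
  show False using 1 2 3 by blast
qed

end
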